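(* Every Schnorr random set $A\subseteq\omega$ is canonically immune.
   Context: A canonical numbering of the finite sets is a surjective map $e\mapsto D_e$ from $\omega$ onto the finite subsets of $\omega$ such that $\{(e,x): x\in D_e\}$ is recursive and $e\mapsto|D_e|$ is recursive. A set $R\subseteq\omega$ is canonically immune if $R$ is infinite and there is a recursive function $h$ such that for every canonical numbering $(D_e)$ of the finite sets, for all but finitely many $e$, if $D_e\subseteq R$ then $|D_e|\le h(e)$. Schnorr randomness is with respect to the uniform (fair coin) measure on $2^\omega$, identifying sets with their characteristic sequences. *)

theory Defs
  imports "HOL-Probability.Probability"
begin

datatype rf = Z | S | Proj nat | Comp rf "rf list" | Prec rf rf | Mn rf

inductive evalr :: "rf \<Rightarrow> nat list \<Rightarrow> nat \<Rightarrow> bool" where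
  ev_Z: "evalr Z xs 0"
| ev_S: "evalr S (x # xs) (Suc x)"
| ev_Proj: "i < length xs \<Longrightarrow> evalr (Proj i) xs (xs ! i)"
| ev_Comp: "list_all2 (\<lambda>g y. evalr g xs y) gs ys \<Longrightarrow> evalr f ys z \<Longrightarrow> evalr (Comp f gs) xs z"
| ev_Prec0: "evalr g xs y \<Longrightarrow> evalr (Prec g h) (0 # xs) y"
| ev_PrecS: "evalr (Prec g h) (n # xs) r \<Longrightarrow> evalr h (n # r # xs) y
             \<Longrightarrow> evalr (Prec g h) (Suc n # xs) y"
| ev_Mn: "evalr f (y # xs) 0 \<Longrightarrow> (\<forall>z<y. \<exists>v. evalr f (z # xs) v \<and> 0 < v)
          \<Longrightarrow> evalr (Mn f) xs y"

definition total_rec1 :: "(nat \<Rightarrow> nat) \<Rightarrow> bool" where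
  "total_rec1 f \<longleftrightarrow> (\<exists>t. \<forall>x. evalr t [x] (f x))"

definition total_rec2 :: "(nat \<Rightarrow> nat \<Rightarrow> nat) \<Rightarrow> bool" where
  "total_rec2 f \<longleftrightarrow> (\<exists>t. \<forall>x y. evalr t [x, y] (f x y))"

definition rec_rel2 :: "(nat \<Rightarrow> nat \<Rightarrow> bool) \<Rightarrow> bool" where
  "rec_rel2 P \<longleftrightarrow> total_rec2 (\<lambda>x y. if P x y then 1 else 0)"

definition ce_set2 :: "(nat \<times> nat) set \<Rightarrow> bool" where
  "ce_set2 W \<longleftrightarrow> (\<exists>t. \<forall>n m. (n, m) \<in> W \<longleftrightarrow> (\<exists>y. evalr t [n, m] y))"

definition canonical_numbering :: "(nat \<Rightarrow> nat set) \<Rightarrow> bool" where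
  "canonical_numbering D \<longleftrightarrow>
     range D = {F. finite F} \<and> rec_rel2 (\<lambda>e x. x \<in> D e) \<and> total_rec1 (\<lambda>e. card (D e))"

definition canonically_immune :: "nat set \<Rightarrow> bool" where
  "canonically_immune R \<longleftrightarrow> infinite R \<and>
     (\<exists>h. total_rec1 h \<and>
        (\<forall>D. canonical_numbering D \<longrightarrow> finite {e. D e \<subseteq> R \<and> h e < card (D e)}))"

text \<open>Effective coding of finite binary strings by natural numbers (a bijection).\<close>
fun bl_of_nat :: "nat \<Rightarrow> bool list" where
  "bl_of_nat n = (if n = 0 then [] else bl_of_nat ((n - 1) div 2) @ [(n - 1) mod 2 = 1])"

definition cyl :: "bool list \<Rightarrow> (nat \<Rightarrow> bool) set" where
  "cyl \<sigma> = {X. \<forall>i < length \<sigma>. X i = \<sigma> ! i}"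

definition coin :: "(nat \<Rightarrow> bool) measure" where
  "coin = PiM UNIV (\<lambda>_::nat. measure_pmf (bernoulli_pmf (1/2)))"

text \<open>The n-th open set generated by the c.e. set of (level, string-code) pairs W.\<close>
definition test_set :: "(nat \<times> nat) set \<Rightarrow> nat \<Rightarrow> (nat \<Rightarrow> bool) set" where
  "test_set W n = (\<Union>m\<in>{m. (n, m) \<in> W}. cyl (bl_of_nat m))"

text \<open>Schnorr test: uniformly c.e. open sets U_n with measure \<le> 2^-n, and the measures
  uniformly computable reals (a n k / (b n k + 1) approximates the measure of U_n within 2^-k).\<close>
definition schnorr_test :: "(nat \<times> nat) set \<Rightarrow> (nat \<Rightarrow> nat \<Rightarrow> nat) \<Rightarrow> (nat \<Rightarrow> nat \<Rightarrow> nat) \<Rightarrow> bool" where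
  "schnorr_test W a b \<longleftrightarrow> ce_set2 W \<and> total_rec2 a \<and> total_rec2 b \<and>
     (\<forall>n. measure coin (test_set W n) \<le> (1/2) ^ n) \<and>
     (\<forall>n k. \<bar>measure coin (test_set W n) - real (a n k) / real (b n k + 1)\<bar> \<le> (1/2) ^ k)"

definition schnorr_random :: "nat set \<Rightarrow> bool" where
  "schnorr_random A \<longleftrightarrow>
     (\<forall>W a b. schnorr_test W a b \<longrightarrow> (\<exists>n. (\<lambda>i. i \<in> A) \<notin> test_set W n))"

end

theory Submission
  imports Defs
begin

inductive_cases ZE: "evalr Z xs y"
inductive_cases SE: "evalr S xs y"
inductive_cases ProjE: "evalr (Proj i) xs y"
inductive_cases CompE: "evalr (Comp f gs) xs y"
inductive_cases PrecE: "evalr (Prec g h) xs y"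
inductive_cases MnE: "evalr (Mn f) xs y"

lemma list_all2_det:
  assumes "list_all2 P gs ys" "list_all2 Q gs ys'" "\<And>g y y'. P g y \<Longrightarrow> Q g y' \<Longrightarrow> y = y'"
  shows "ys = ys'"
  using assms(1,2)
proof (induction arbitrary: ys' rule: list_all2_induct)
  case Nil then show ?case by simp
next
  case (Cons g gs y ys)
  then obtain y' ys'' where "ys' = y' # ys''" "Q g y'" "list_all2 Q gs ys''"
    by (auto simp: list_all2_Cons1)
  then show ?case using Cons assms(3) by auto
qed

lemma evalr_det: "evalr t xs y \<Longrightarrow> evalr t xs y' \<Longrightarrow> y = y'"
proof (induction arbitrary: y' rule: evalr.induct)
  case (ev_Z xs) then show ?case by (auto elim: ZE)
next
  case (ev_S x xs) then show ?case by (auto elim: SE)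
next
  case (ev_Proj i xs) then show ?case by (auto elim: ProjE)
next
  case (ev_Comp xs gs ys f z)
  from ev_Comp.prems obtain ys' where a: "list_all2 (\<lambda>g y. evalr g xs y) gs ys'" "evalr f ys' y'"
    by (auto elim: CompE)
  have "ys = ys'"
    by (rule list_all2_det[OF ev_Comp(1) a(1)]) auto
  then have "evalr f ys y'" using a(2) by simp
  then show ?case by (rule ev_Comp(2))
next
  case (ev_Prec0 g xs y h)
  from ev_Prec0.prems show ?case
    by (rule PrecE) (use ev_Prec0.IH in auto)
next
  case (ev_PrecS g h n xs r y)
  from ev_PrecS.prems obtain r' where "evalr (Prec g h) (n # xs) r'" "evalr h (n # r' # xs) y'"
    by (rule PrecE) auto
  then show ?case using ev_PrecS.IH by auto
next
  case (ev_Mn f y xs)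
  from ev_Mn.prems have b: "evalr f (y' # xs) 0" "\<forall>z<y'. \<exists>v. evalr f (z # xs) v \<and> 0 < v"
    by (rule MnE, simp)+
  show ?case
  proof (rule ccontr)
    assume "y \<noteq> y'"
    then consider "y < y'" | "y' < y" by linarith
    then show False
    proof cases
      case 1
      then obtain v where "evalr f (y # xs) v" "0 < v" using b by auto
      then show False using ev_Mn(2) by fastforce
    next
      case 2
      then obtain v where "evalr f (y' # xs) v" "0 < v" "\<forall>v'. evalr f (y' # xs) v' \<longrightarrow> v = v'"
        using ev_Mn(3) by blast
      then show False using b(1) by fastforce
    qed
  qed
qed

definition cf :: "nat \<Rightarrow> (nat list \<Rightarrow> nat) \<Rightarrow> bool" where
  "cf k f \<longleftrightarrow> (\<exists>t. \<forall>xs. length xs = k \<longrightarrow> evalr t xs (f xs))"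

lemma cf_cong: "cf k f \<Longrightarrow> (\<And>xs. length xs = k \<Longrightarrow> f xs = g xs) \<Longrightarrow> cf k g"
  unfolding cf_def by metis

lemma cf_proj: "i < k \<Longrightarrow> cf k (\<lambda>xs. xs ! i)"
  unfolding cf_def by (auto intro!: exI[of _ "Proj i"] ev_Proj)

lemma cf_zero: "cf k (\<lambda>xs. 0)"
  unfolding cf_def by (auto intro!: exI[of _ Z] ev_Z)

lemma cf_S: "cf 1 (\<lambda>xs. Suc (xs ! 0))"
  unfolding cf_def
proof (intro exI[of _ S] allI impI)
  fix xs :: "nat list" assume "length xs = 1"
  then obtain x where "xs = [x]" by (cases xs) auto
  then show "evalr S xs (Suc (xs ! 0))" by (auto intro: ev_S)
qed

lemma progs: "\<forall>g\<in>set gs. cf k g \<Longrightarrow> \<exists>ts. list_all2 (\<lambda>g t. \<forall>xs. length xs = k \<longrightarrow> evalr t xs (g xs)) gs ts"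
proof (induction gs)
  case Nil then show ?case by auto
next
  case (Cons g gs)
  then obtain ts where "list_all2 (\<lambda>g t. \<forall>xs. length xs = k \<longrightarrow> evalr t xs (g xs)) gs ts" by auto
  moreover obtain t where "\<forall>xs. length xs = k \<longrightarrow> evalr t xs (g xs)" using Cons.prems by (auto simp: cf_def)
  ultimately show ?case by (intro exI[of _ "t # ts"]) auto
qed

lemma progs_eval: "list_all2 (\<lambda>g t. \<forall>xs. length xs = k \<longrightarrow> evalr t xs (g xs)) gs ts \<Longrightarrow> length xs = k
  \<Longrightarrow> list_all2 (\<lambda>t y. evalr t xs y) ts (map (\<lambda>g. g xs) gs)"
  by (induction rule: list_all2_induct) auto

lemma cf_comp: "cf (length gs) f \<Longrightarrow> \<forall>g\<in>set gs. cf k g \<Longrightarrow> cf k (\<lambda>xs. f (map (\<lambda>g. g xs) gs))"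
proof -
  assume f: "cf (length gs) f" and g: "\<forall>g\<in>set gs. cf k g"
  obtain tf where tf: "\<forall>ys. length ys = length gs \<longrightarrow> evalr tf ys (f ys)" using f by (auto simp: cf_def)
  obtain ts where ts: "list_all2 (\<lambda>g t. \<forall>xs. length xs = k \<longrightarrow> evalr t xs (g xs)) gs ts"
    using progs[OF g] by auto
  show ?thesis unfolding cf_def
  proof (intro exI[of _ "Comp tf ts"] allI impI)
    fix xs :: "nat list" assume "length xs = k"
    show "evalr (Comp tf ts) xs (f (map (\<lambda>g. g xs) gs))"
      by (rule ev_Comp[OF progs_eval[OF ts \<open>length xs = k\<close>]]) (use tf in auto)
  qed
qed

lemma cf_comp1: "cf 1 f \<Longrightarrow> cf k g \<Longrightarrow> cf k (\<lambda>xs. f [g xs])"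
  using cf_comp[of "[g]" f k] by simp

lemma cf_comp2: "cf 2 f \<Longrightarrow> cf k g \<Longrightarrow> cf k h \<Longrightarrow> cf k (\<lambda>xs. f [g xs, h xs])"
  using cf_comp[of "[g, h]" f k] by (simp add: numeral_2_eq_2)

lemma cf_comp3: "cf 3 f \<Longrightarrow> cf k g \<Longrightarrow> cf k h \<Longrightarrow> cf k i \<Longrightarrow> cf k (\<lambda>xs. f [g xs, h xs, i xs])"
  using cf_comp[of "[g, h, i]" f k] by (simp add: numeral_3_eq_3)

fun prec :: "(nat list \<Rightarrow> nat) \<Rightarrow> (nat list \<Rightarrow> nat) \<Rightarrow> nat \<Rightarrow> nat list \<Rightarrow> nat" where
  "prec g h 0 xs = g xs"
| "prec g h (Suc n) xs = h (n # prec g h n xs # xs)"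

lemma cf_prec: "cf k g \<Longrightarrow> cf (Suc (Suc k)) h \<Longrightarrow> cf (Suc k) (\<lambda>xs. prec g h (hd xs) (tl xs))"
proof -
  assume "cf k g" "cf (Suc (Suc k)) h"
  then obtain tg th where tg: "\<forall>xs. length xs = k \<longrightarrow> evalr tg xs (g xs)"
    and th: "\<forall>xs. length xs = Suc (Suc k) \<longrightarrow> evalr th xs (h xs)" by (auto simp: cf_def)
  have *: "length xs = k \<Longrightarrow> evalr (Prec tg th) (n # xs) (prec g h n xs)" for n xs
    by (induction n) (auto intro!: ev_Prec0 ev_PrecS tg[rule_format] th[rule_format])
  show ?thesis unfolding cf_def
  proof (intro exI[of _ "Prec tg th"] allI impI)
    fix xs :: "nat list" assume "length xs = Suc k"
    then obtain n ys where "xs = n # ys" "length ys = k" by (cases xs) auto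
    then show "evalr (Prec tg th) xs (prec g h (hd xs) (tl xs))" using * by auto
  qed
qed

lemma cf_mn0: "cf (Suc k) f \<Longrightarrow> (\<And>xs. length xs = k \<Longrightarrow> \<exists>y. f (y # xs) = 0)
   \<Longrightarrow> cf k (\<lambda>xs. LEAST y. f (y # xs) = 0)"
proof -
  assume "cf (Suc k) f" and ex: "\<And>xs. length xs = k \<Longrightarrow> \<exists>y. f (y # xs) = 0"
  then obtain tf where tf: "\<forall>xs. length xs = Suc k \<longrightarrow> evalr tf xs (f xs)" by (auto simp: cf_def)
  show ?thesis unfolding cf_def
  proof (intro exI[of _ "Mn tf"] allI impI)
    fix xs :: "nat list" assume l: "length xs = k"
    let ?y = "LEAST y. f (y # xs) = 0"
    have f0: "f (?y # xs) = 0" using ex[OF l] by (rule LeastI_ex)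
    have nz: "\<forall>z<?y. f (z # xs) \<noteq> 0" by (auto dest: not_less_Least)
    have e: "\<And>z. evalr tf (z # xs) (f (z # xs))" by (rule tf[rule_format]) (simp add: l)
    show "evalr (Mn tf) xs ?y"
    proof (rule ev_Mn)
      show "evalr tf (?y # xs) 0" using e[of ?y] f0 by metis
      show "\<forall>z<?y. \<exists>v. evalr tf (z # xs) v \<and> 0 < v"
      proof (intro allI impI)
        fix z assume zy: "z < ?y"
        have "f (z # xs) \<noteq> 0" by (rule nz[rule_format, OF zy])
        then show "\<exists>v. evalr tf (z # xs) v \<and> 0 < v" using e[of z] by blast
      qed
    qed
  qed
qed

lemma ce_mn: "cf (Suc k) f \<Longrightarrow> \<exists>t. \<forall>xs. length xs = k \<longrightarrow> ((\<exists>y. f (y # xs) = 0) \<longleftrightarrow> (\<exists>v. evalr t xs v))"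
proof -
  assume "cf (Suc k) f"
  then obtain tf where tf: "\<forall>xs. length xs = Suc k \<longrightarrow> evalr tf xs (f xs)" by (auto simp: cf_def)
  show ?thesis
  proof (intro exI[of _ "Mn tf"] allI impI iffI)
    fix xs :: "nat list" assume l: "length xs = k" and "\<exists>y. f (y # xs) = 0"
    let ?y = "LEAST y. f (y # xs) = 0"
    have f0: "f (?y # xs) = 0" using \<open>\<exists>y. f (y # xs) = 0\<close> by (rule LeastI_ex)
    have nz: "\<forall>z<?y. f (z # xs) \<noteq> 0" by (auto dest: not_less_Least)
    have e: "\<And>z. evalr tf (z # xs) (f (z # xs))" by (rule tf[rule_format]) (simp add: l)
    have "evalr (Mn tf) xs ?y"
    proof (rule ev_Mn)
      show "evalr tf (?y # xs) 0" using e[of ?y] f0 by metis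
      show "\<forall>z<?y. \<exists>v. evalr tf (z # xs) v \<and> 0 < v"
      proof (intro allI impI)
        fix z assume zy: "z < ?y"
        have "f (z # xs) \<noteq> 0" by (rule nz[rule_format, OF zy])
        then show "\<exists>v. evalr tf (z # xs) v \<and> 0 < v" using e[of z] by blast
      qed
    qed
    then show "\<exists>v. evalr (Mn tf) xs v" by blast
  next
    fix xs :: "nat list" assume l: "length xs = k" and "\<exists>v. evalr (Mn tf) xs v"
    then obtain v where "evalr (Mn tf) xs v" by blast
    then have a: "evalr tf (v # xs) 0" by (rule MnE)
    have b: "evalr tf (v # xs) (f (v # xs))" using tf l by simp
    have "f (v # xs) = 0" using evalr_det[OF b a] .
    then show "\<exists>y. f (y # xs) = 0" by blast
  qed
qed

lemma len1: "length xs = 1 \<Longrightarrow> xs = [xs!0]"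
  by (cases xs) auto
lemma len2: "length xs = 2 \<Longrightarrow> xs = [xs!0, xs!1]"
  by (cases xs; cases "tl xs") (auto simp: numeral_2_eq_2)
lemma len3: "length xs = 3 \<Longrightarrow> xs = [xs!0, xs!1, xs!2]"
  by (cases xs; cases "tl xs"; cases "tl (tl xs)") (auto simp: numeral_3_eq_3)

lemma map_nth_upt: "length xs = k \<Longrightarrow> map (\<lambda>i. xs ! i) [0..<k] = xs"
  using map_nth[of xs] by simp

lemma cf_cong1: "cf 1 F \<Longrightarrow> (\<And>a. F [a] = G [a]) \<Longrightarrow> cf 1 G"
  by (erule cf_cong) (metis len1)
lemma cf_cong2: "cf 2 F \<Longrightarrow> (\<And>a b. F [a,b] = G [a,b]) \<Longrightarrow> cf 2 G"
  by (erule cf_cong) (metis len2)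

lemma cf_subst0: "cf (Suc k) F \<Longrightarrow> cf k g \<Longrightarrow> cf k (\<lambda>xs. F (g xs # xs))"
proof -
  assume F: "cf (Suc k) F" and g: "cf k g"
  let ?gs = "g # map (\<lambda>i xs. xs ! i) [0..<k]"
  have "cf k (\<lambda>xs. F (map (\<lambda>h. h xs) ?gs))"
    by (rule cf_comp) (use F g in \<open>auto intro: cf_proj\<close>)
  then show ?thesis
    by (rule cf_cong) (simp add: comp_def map_nth_upt)
qed

lemma cf_tl: "cf k F \<Longrightarrow> cf (Suc k) (\<lambda>xs. F (tl xs))"
proof -
  assume F: "cf k F"
  let ?gs = "map (\<lambda>i xs. xs ! Suc i) [0..<k]"
  have "cf (Suc k) (\<lambda>xs. F (map (\<lambda>h. h xs) ?gs))"
    by (rule cf_comp) (use F in \<open>auto intro: cf_proj\<close>)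
  then show ?thesis
  proof (rule cf_cong)
    fix xs :: "nat list" assume "length xs = Suc k"
    then obtain a ys where "xs = a # ys" "length ys = k" by (cases xs) auto
    then show "F (map (\<lambda>h. h xs) ?gs) = F (tl xs)" by (simp add: comp_def map_nth_upt)
  qed
qed

lemma cf_suc: "cf k f \<Longrightarrow> cf k (\<lambda>xs. Suc (f xs))"
  using cf_comp1[OF cf_S] by simp

lemma cf_const: "cf k (\<lambda>xs. c)"
  by (induction c) (auto intro: cf_zero cf_suc[of k "\<lambda>_. _", simplified])

lemma cf_add0: "cf 2 (\<lambda>xs. xs!0 + xs!1)"
proof -
  have "cf 2 (\<lambda>xs. prec (\<lambda>xs. xs!0) (\<lambda>ys. Suc (ys!1)) (hd xs) (tl xs))"
    using cf_prec[of 1 "\<lambda>xs. xs!0" "\<lambda>ys. Suc (ys!1)"]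
    by (simp add: numeral_2_eq_2 cf_proj cf_suc)
  moreover have "prec (\<lambda>xs. xs!0) (\<lambda>ys. Suc (ys!1)) n [m] = n + m" for n m
    by (induction n) auto
  ultimately show ?thesis
    by (elim cf_cong2) simp
qed

lemma cf_add: "cf k f \<Longrightarrow> cf k g \<Longrightarrow> cf k (\<lambda>xs. f xs + g xs)"
  using cf_comp2[OF cf_add0] by simp

lemma cf_mult0: "cf 2 (\<lambda>xs. xs!0 * xs!1)"
proof -
  have "cf 2 (\<lambda>xs. prec (\<lambda>xs. 0) (\<lambda>ys. ys!1 + ys!2) (hd xs) (tl xs))"
    using cf_prec[of 1 "\<lambda>xs. 0" "\<lambda>ys. ys!1 + ys!2"]
    by (simp add: numeral_2_eq_2 cf_proj cf_add cf_zero)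
  moreover have "prec (\<lambda>xs. 0) (\<lambda>ys. ys!1 + ys!2) n [m] = n * m" for n m
    by (induction n) auto
  ultimately show ?thesis
    by (elim cf_cong2) simp
qed

lemma cf_mult: "cf k f \<Longrightarrow> cf k g \<Longrightarrow> cf k (\<lambda>xs. f xs * g xs)"
  using cf_comp2[OF cf_mult0] by simp

lemma cf_pred0: "cf 1 (\<lambda>xs. xs!0 - 1)"
proof -
  have "cf 1 (\<lambda>xs. prec (\<lambda>xs. 0) (\<lambda>ys. ys!0) (hd xs) (tl xs))"
    using cf_prec[of 0 "\<lambda>xs. 0" "\<lambda>ys. ys!0"]
    by (simp add: cf_proj cf_zero)
  moreover have "prec (\<lambda>xs. 0) (\<lambda>ys. ys!0) n [] = n - 1" for n
    by (induction n) auto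
  ultimately show ?thesis
    by (elim cf_cong1) simp
qed

lemma cf_sub0: "cf 2 (\<lambda>xs. xs!1 - xs!0)"
proof -
  have p: "cf 3 (\<lambda>ys. ys!1 - 1)"
    using cf_comp1[OF cf_pred0 cf_proj[of 1 3]] by simp
  have "cf 2 (\<lambda>xs. prec (\<lambda>xs. xs!0) (\<lambda>ys. ys!1 - 1) (hd xs) (tl xs))"
    using cf_prec[of 1 "\<lambda>xs. xs!0" "\<lambda>ys. ys!1 - 1"] p
    by (simp add: numeral_2_eq_2 numeral_3_eq_3 cf_proj)
  moreover have "prec (\<lambda>xs. xs!0) (\<lambda>ys. ys!1 - 1) n [m] = m - n" for n m
    by (induction n) auto
  ultimately show ?thesis
    by (elim cf_cong2) simp
qed

lemma cf_sub: "cf k f \<Longrightarrow> cf k g \<Longrightarrow> cf k (\<lambda>xs. f xs - g xs)"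
  using cf_comp2[OF cf_sub0, of k g f] by simp

lemma cf_pow0: "cf 1 (\<lambda>xs. 2 ^ (xs!0))"
proof -
  have "cf 1 (\<lambda>xs. prec (\<lambda>xs. 1) (\<lambda>ys. ys!1 + ys!1) (hd xs) (tl xs))"
    using cf_prec[of 0 "\<lambda>xs. 1" "\<lambda>ys. ys!1 + ys!1"]
    by (simp add: cf_proj cf_const cf_add)
  moreover have "prec (\<lambda>xs. 1) (\<lambda>ys. ys!1 + ys!1) n [] = 2 ^ n" for n
    by (induction n) auto
  ultimately show ?thesis
    by (elim cf_cong1) simp
qed

lemma cf_pow2: "cf k f \<Longrightarrow> cf k (\<lambda>xs. 2 ^ f xs)"
  using cf_comp1[OF cf_pow0] by simp

lemma prec_sum: "prec (\<lambda>xs. 0) (\<lambda>ys. ys!1 + f (ys!0 # drop 2 ys)) n xs = (\<Sum>y<n. f (y # xs))"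
  by (induction n) auto

lemma cf_bsum0: "cf (Suc k) f \<Longrightarrow> cf (Suc k) (\<lambda>xs. \<Sum>y<hd xs. f (y # tl xs))"
proof -
  assume f: "cf (Suc k) f"
  let ?gs = "(\<lambda>ys. ys!0) # map (\<lambda>i ys. ys ! (i+2)) [0..<k]"
  have "cf (Suc (Suc k)) (\<lambda>ys. f (map (\<lambda>h. h ys) ?gs))"
    by (rule cf_comp) (use f in \<open>auto intro: cf_proj\<close>)
  then have h1: "cf (Suc (Suc k)) (\<lambda>ys. f (ys!0 # drop 2 ys))"
  proof (rule cf_cong)
    fix ys :: "nat list" assume "length ys = Suc (Suc k)"
    then obtain a b zs where "ys = a # b # zs" "length zs = k"
      by (metis Suc_length_conv)
    then show "f (map (\<lambda>h. h ys) ?gs) = f (ys!0 # drop 2 ys)" by (simp add: comp_def map_nth_upt)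
  qed
  have h: "cf (Suc (Suc k)) (\<lambda>ys. ys!1 + f (ys!0 # drop 2 ys))"
    by (rule cf_add[OF cf_proj h1]) simp
  show ?thesis
    using cf_prec[OF cf_zero h] unfolding prec_sum .
qed

lemma cf_bsum: "cf (Suc k) f \<Longrightarrow> cf k g \<Longrightarrow> cf k (\<lambda>xs. \<Sum>y<g xs. f (y # xs))"
  using cf_subst0[OF cf_bsum0] by simp

definition cp :: "nat \<Rightarrow> (nat list \<Rightarrow> bool) \<Rightarrow> bool" where
  "cp k P \<longleftrightarrow> cf k (\<lambda>xs. if P xs then 1 else 0)"

lemma cp_cong: "cp k P \<Longrightarrow> (\<And>xs. length xs = k \<Longrightarrow> P xs = Q xs) \<Longrightarrow> cp k Q"
  unfolding cp_def by (erule cf_cong) simp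

lemma cp_le: "cf k f \<Longrightarrow> cf k g \<Longrightarrow> cp k (\<lambda>xs. f xs \<le> g xs)"
proof -
  assume "cf k f" "cf k g"
  then have "cf k (\<lambda>xs. 1 - (f xs - g xs))" by (intro cf_sub cf_const)
  then show ?thesis unfolding cp_def by (rule cf_cong) auto
qed

lemma cp_less: "cf k f \<Longrightarrow> cf k g \<Longrightarrow> cp k (\<lambda>xs. f xs < g xs)"
  using cp_le[OF cf_suc] by (simp add: Suc_le_eq)

lemma cp_not: "cp k P \<Longrightarrow> cp k (\<lambda>xs. \<not> P xs)"
proof -
  assume "cp k P"
  then have "cf k (\<lambda>xs. 1 - (if P xs then 1 else 0))" unfolding cp_def by (intro cf_sub cf_const)
  then show ?thesis unfolding cp_def by (rule cf_cong) auto
qed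

lemma cp_and: "cp k P \<Longrightarrow> cp k Q \<Longrightarrow> cp k (\<lambda>xs. P xs \<and> Q xs)"
proof -
  assume "cp k P" "cp k Q"
  then have "cf k (\<lambda>xs. (if P xs then 1 else 0) * (if Q xs then 1 else 0))" unfolding cp_def by (intro cf_mult)
  then show ?thesis unfolding cp_def by (rule cf_cong) auto
qed

lemma cp_or: "cp k P \<Longrightarrow> cp k Q \<Longrightarrow> cp k (\<lambda>xs. P xs \<or> Q xs)"
  using cp_not[OF cp_and[OF cp_not cp_not]] by simp

lemma cp_imp: "cp k P \<Longrightarrow> cp k Q \<Longrightarrow> cp k (\<lambda>xs. P xs \<longrightarrow> Q xs)"
  using cp_or[OF cp_not] by simp

lemma cp_eq: "cf k f \<Longrightarrow> cf k g \<Longrightarrow> cp k (\<lambda>xs. f xs = g xs)"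
  using cp_and[OF cp_le cp_le] by (simp add: order_eq_iff)

lemma cf_if: "cp k P \<Longrightarrow> cf k f \<Longrightarrow> cf k g \<Longrightarrow> cf k (\<lambda>xs. if P xs then f xs else g xs)"
proof -
  assume "cp k P" "cf k f" "cf k g"
  then have "cf k (\<lambda>xs. (if P xs then 1 else 0) * f xs + (1 - (if P xs then 1 else 0)) * g xs)"
    unfolding cp_def by (intro cf_add cf_mult cf_sub cf_const)
  then show ?thesis by (rule cf_cong) auto
qed

lemma sum_ind: "(\<Sum>y<(n::nat). if P y then 1 else 0::nat) = card {y. y < n \<and> P y}"
proof -
  have "card {x. x < n \<and> P x} = (\<Sum>x<n. if P x then 1 else 0)"
    using sum.inter_filter[OF finite_lessThan[of n], of "\<lambda>_. 1::nat" P] by simp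
  then show ?thesis by simp
qed

lemma cp_bex: "cp (Suc k) P \<Longrightarrow> cf k g \<Longrightarrow> cp k (\<lambda>xs. \<exists>y<g xs. P (y # xs))"
proof -
  assume P: "cp (Suc k) P" and g: "cf k g"
  have s: "cf (Suc k) (\<lambda>ys. if P ys then 1 else 0)" using P by (simp add: cp_def)
  have "cp k (\<lambda>xs. 1 \<le> (\<Sum>y<g xs. if P (y # xs) then 1 else (0::nat)))"
    using cp_le[OF cf_const[of k 1] cf_bsum[OF s g]] .
  then show ?thesis
  proof (rule cp_cong)
    fix xs :: "nat list"
    have "finite {y. y < g xs \<and> P (y # xs)}" by simp
    then show "(1 \<le> (\<Sum>y<g xs. if P (y # xs) then 1 else (0::nat))) = (\<exists>y<g xs. P (y # xs))"
      unfolding sum_ind by (auto simp: Suc_le_eq card_gt_0_iff)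
  qed
qed

lemma cp_ball: "cp (Suc k) P \<Longrightarrow> cf k g \<Longrightarrow> cp k (\<lambda>xs. \<forall>y<g xs. P (y # xs))"
  using cp_not[OF cp_bex[OF cp_not]] by simp

lemma cf_least: "cp (Suc k) P \<Longrightarrow> (\<And>xs. length xs = k \<Longrightarrow> \<exists>y. P (y # xs))
   \<Longrightarrow> cf k (\<lambda>xs. LEAST y. P (y # xs))"
proof -
  assume P: "cp (Suc k) P" and ex: "\<And>xs. length xs = k \<Longrightarrow> \<exists>y. P (y # xs)"
  have "cf k (\<lambda>xs. LEAST y. (1 - (if P (y # xs) then 1 else 0)) = (0::nat))"
    by (rule cf_mn0[OF cf_sub[OF cf_const P[unfolded cp_def]]]) (use ex in auto)
  then show ?thesis by (rule cf_cong) (simp cong: if_cong)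
qed

lemma ce_pred: "cp (Suc k) P \<Longrightarrow> \<exists>t. \<forall>xs. length xs = k \<longrightarrow> ((\<exists>y. P (y # xs)) \<longleftrightarrow> (\<exists>v. evalr t xs v))"
proof -
  assume P: "cp (Suc k) P"
  obtain t where "\<forall>xs. length xs = k \<longrightarrow> ((\<exists>y. (1 - (if P (y # xs) then 1 else 0)) = (0::nat)) \<longleftrightarrow> (\<exists>v. evalr t xs v))"
    using ce_mn[OF cf_sub[OF cf_const P[unfolded cp_def]]] by blast
  then show ?thesis by (intro exI[of _ t]) (auto split: if_splits)
qed

lemma div_sum: "(0::nat) < q \<Longrightarrow> (\<Sum>z<x. if q + z * q \<le> x then 1 else 0) = x div q"
proof -
  assume q: "0 < q"
  have "{z. z < x \<and> Suc z * q \<le> x} = {..<x div q}"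
  proof (rule set_eqI)
    fix z
    have e: "Suc z * q \<le> x \<longleftrightarrow> z < x div q"
      using less_eq_div_iff_mult_less_eq[OF q, of "Suc z" x] by (simp add: Suc_le_eq)
    have "z < x div q \<Longrightarrow> z < x" by (meson div_le_dividend less_le_trans)
    then show "z \<in> {z. z < x \<and> Suc z * q \<le> x} \<longleftrightarrow> z \<in> {..<x div q}" using e by auto
  qed
  then show ?thesis using sum_ind[where n=x and P="\<lambda>z. Suc z * q \<le> x"] by simp
qed

lemma cf_div: "cf k f \<Longrightarrow> cf k g \<Longrightarrow> cf k (\<lambda>xs. f xs div g xs)"
proof -
  assume f: "cf k f" and g: "cf k g"
  have s: "cf (Suc k) (\<lambda>ys. if Suc (ys!0) * g (tl ys) \<le> f (tl ys) then 1 else 0)"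
    using cp_le[OF cf_mult[OF cf_suc[OF cf_proj] cf_tl[OF g]] cf_tl[OF f], of 0]
    by (simp add: cp_def)
  have "cf k (\<lambda>xs. if g xs = 0 then 0 else (\<Sum>z<f xs. if Suc z * g xs \<le> f xs then 1 else 0))"
    by (rule cf_if[OF cp_eq[OF g cf_const] cf_const]) (use cf_bsum[OF s f] in simp)
  then show ?thesis by (rule cf_cong) (simp add: div_sum)
qed

lemma cf_mod: "cf k f \<Longrightarrow> cf k g \<Longrightarrow> cf k (\<lambda>xs. f xs mod g xs)"
proof -
  assume f: "cf k f" and g: "cf k g"
  have "cf k (\<lambda>xs. f xs - g xs * (f xs div g xs))" by (intro cf_sub cf_mult cf_div f g)
  then show ?thesis by (rule cf_cong) (simp add: minus_mult_div_eq_mod)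
qed

lemma cp_bit: "cf k f \<Longrightarrow> cf k g \<Longrightarrow> cp k (\<lambda>xs. bit (f xs) (g xs))"
proof -
  assume f: "cf k f" and g: "cf k g"
  have "cp k (\<lambda>xs. f xs div 2 ^ g xs mod 2 = 1)"
    by (intro cp_eq cf_mod cf_div cf_pow2 f g cf_const)
  then show ?thesis by (rule cp_cong) (simp add: bit_iff_odd odd_iff_mod_2_eq_one)
qed

lemma total_rec1_cf: "cf 1 (\<lambda>xs. f (xs!0)) \<Longrightarrow> total_rec1 f"
  unfolding cf_def total_rec1_def by (metis length_Cons list.size(3) nth_Cons_0 One_nat_def)

lemma total_rec2_cf: "cf 2 (\<lambda>xs. f (xs!0) (xs!1)) \<Longrightarrow> total_rec2 f"
  unfolding cf_def total_rec2_def
  by (metis (no_types, lifting) length_Cons list.size(3) nth_Cons_0 nth_Cons_Suc numeral_2_eq_2 One_nat_def)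

lemma cf_total_rec1: "total_rec1 f \<Longrightarrow> cf 1 (\<lambda>xs. f (xs!0))"
  unfolding cf_def total_rec1_def by (metis len1)

lemma cf_total_rec2: "total_rec2 f \<Longrightarrow> cf 2 (\<lambda>xs. f (xs!0) (xs!1))"
  unfolding cf_def total_rec2_def by (metis len2)

lemma cp_rec_rel2: "rec_rel2 P \<Longrightarrow> cp 2 (\<lambda>xs. P (xs!0) (xs!1))"
  using cf_total_rec2[of "\<lambda>x y. if P x y then 1 else 0"] by (simp add: rec_rel2_def cp_def)

declare bl_of_nat.simps[simp del]

definition code :: "nat \<Rightarrow> (nat \<Rightarrow> bool) \<Rightarrow> nat" where
  "code L X = (\<Sum>i<L. if X i then 2^i else 0)"

lemma code_Suc: "code (Suc L) X = code L X + (if X L then 2^L else 0)"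
  by (simp add: code_def)

lemma code_less: "code L X < 2^L"
  by (induction L) (auto simp: code_Suc code_def[of 0])

lemma code_eq_iff: "c < 2^L \<Longrightarrow> code L X = c \<longleftrightarrow> (\<forall>i<L. X i = bit c i)"
proof (induction L arbitrary: c)
  case 0 then show ?case by (simp add: code_def)
next
  case (Suc L)
  have c: "c = c mod 2^L + (if bit c L then 2^L else 0)"
  proof -
    have "c div 2^L < 2" using Suc.prems by (simp add: div_less_iff_less_mult mult.commute)
    then have "c div 2^L = 0 \<or> c div 2^L = 1" by linarith
    then have "c div 2^L = (if bit c L then 1 else 0)"
      by (auto simp: bit_iff_odd)
    then show ?thesis by (metis mult.commute mult_1 mult_0 mod_div_mult_eq add.commute)
  qed
  have m: "c mod 2^L < 2^L" by simp
  have IH: "code L X = c mod 2^L \<longleftrightarrow> (\<forall>i<L. X i = bit c i)"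
  proof -
    have "bit (c mod 2^L) i = bit c i" if "i < L" for i
      using that by (metis bit_take_bit_iff take_bit_eq_mod)
    then show ?thesis using Suc.IH[OF m] by auto
  qed
  have cl: "code L X < 2^L" by (rule code_less)
  have "code (Suc L) X = c \<longleftrightarrow> code L X = c mod 2^L \<and> (X L = bit c L)"
  proof -
    have gen: "\<And>(a::nat) d x b. a < 2^L \<Longrightarrow> d < 2^L \<Longrightarrow>
       (a + (if x then 2^L else 0) = d + (if b then 2^L else 0)) \<longleftrightarrow> a = d \<and> x = b"
      by auto
    show ?thesis
      using gen[OF cl m, of "X L" "bit c L"] c by (simp add: code_Suc)
  qed
  then show ?case using IH by (auto simp: less_Suc_eq)
qed

lemma code_mod: "L \<le> M \<Longrightarrow> code L X = code M X mod 2^L"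
proof (induction M)
  case 0 then show ?case by (simp add: code_def)
next
  case (Suc M)
  show ?case
  proof (cases "L = Suc M")
    case True then show ?thesis using code_less[of "Suc M" X] by simp
  next
    case False
    then have "L \<le> M" using Suc by simp
    have "2^L dvd (2::nat)^M" using \<open>L \<le> M\<close> by (simp add: le_imp_power_dvd)
    then have "(code M X + (if X M then 2^M else 0)) mod 2^L = code M X mod 2^L"
      by (auto simp: mod_add_right_eq[symmetric])
    then show ?thesis using Suc.IH[OF \<open>L \<le> M\<close>] by (simp add: code_Suc)
  qed
qed

abbreviation B :: "bool measure" where "B \<equiv> measure_pmf (bernoulli_pmf (1/2))"

lemma space_coin[simp]: "space coin = UNIV"
  by (simp add: coin_def space_PiM PiE_UNIV_domain)

lemma prob_coin: "prob_space coin"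
  unfolding coin_def by (rule prob_space_PiM) (simp add: measure_pmf.prob_space_axioms)

lemma code_set: "c < 2^L \<Longrightarrow> {X. code L X = c} =
   prod_emb UNIV (\<lambda>_. B) {..<L} (\<Pi>\<^sub>E i\<in>{..<L}. {bit c i})"
  by (auto simp: code_eq_iff prod_emb_iff PiE_iff)

lemma code_set_sets: "{X. code L X = c} \<in> sets coin"
proof (cases "c < 2^L")
  case True then show ?thesis
    unfolding coin_def code_set[OF True] by (intro sets_PiM_I) auto
next
  case False
  then have "{X. code L X = c} = {}" using code_less[of L] by (auto simp: not_less) (metis leD)
  then show ?thesis by simp
qed

lemma code_set_emeasure: "c < 2^L \<Longrightarrow> emeasure coin {X. code L X = c} = ennreal ((1/2)^L)"
proof -
  assume c: "c < 2^L"
  have "emeasure coin {X. code L X = c} = (\<Prod>i\<in>{..<L}. emeasure B {bit c i})"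
    unfolding coin_def code_set[OF c]
    by (rule emeasure_PiM_emb) (auto simp: measure_pmf.prob_space_axioms)
  also have "\<dots> = (\<Prod>i\<in>{..<L}. ennreal (1/2))"
    by (intro prod.cong refl) (auto simp: emeasure_pmf_single)
  also have "\<dots> = ennreal (\<Prod>i\<in>{..<L}. 1/2)" by (rule prod_ennreal) auto
  also have "\<dots> = ennreal ((1/2)^L)" by simp
  finally show ?thesis by simp
qed

lemma code_set_measure: "c < 2^L \<Longrightarrow> measure coin {X. code L X = c} = (1/2)^L"
  using code_set_emeasure by (simp add: measure_def)

lemma code_in_eq: "{X. code L X \<in> Sx} = (\<Union>c\<in>Sx \<inter> {..<2^L}. {X. code L X = c})"
  using code_less by auto

lemma code_in_sets: "{X. code L X \<in> Sx} \<in> sets coin"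
  unfolding code_in_eq by (intro sets.finite_UN) (auto intro: code_set_sets)

lemma code_in_measure: "measure coin {X. code L X \<in> Sx} = card (Sx \<inter> {..<2^L}) / 2^L"
proof -
  interpret P: prob_space coin by (rule prob_coin)
  have "measure coin {X. code L X \<in> Sx} = (\<Sum>c\<in>Sx \<inter> {..<2^L}. measure coin {X. code L X = c})"
    unfolding code_in_eq
    by (rule measure_finite_Union) (auto simp: code_set_sets disjoint_family_on_def)
  also have "\<dots> = (\<Sum>c\<in>Sx \<inter> {..<2^L}. (1/2)^L)"
    by (intro sum.cong refl) (auto simp: code_set_measure)
  finally show ?thesis by (simp add: power_divide)
qed

fun nc :: "nat \<Rightarrow> nat \<Rightarrow> nat" where
  "nc 0 c = 0"
| "nc (Suc L) c = 2 * nc L c + 1 + (if bit c L then 1 else 0)"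

lemma bl_nc: "bl_of_nat (nc L c) = map (\<lambda>i. bit c i) [0..<L]"
proof (induction L)
  case 0 then show ?case by (simp add: bl_of_nat.simps)
next
  case (Suc L)
  let ?n = "nc (Suc L) c"
  have d: "(?n - 1) div 2 = nc L c" by (cases "bit c L") simp_all
  have m: "((?n - 1) mod 2 = 1) = bit c L" by (cases "bit c L") simp_all
  have "bl_of_nat ?n = bl_of_nat ((?n - 1) div 2) @ [(?n - 1) mod 2 = 1]"
    by (subst bl_of_nat.simps) simp
  then show ?case using d m Suc.IH by simp
qed

lemma cyl_nc: assumes "c < 2^L" shows "cyl (bl_of_nat (nc L c)) = {X. code L X = c}"
proof -
  have "cyl (bl_of_nat (nc L c)) = {X. \<forall>i<L. X i = bit c i}" unfolding bl_nc cyl_def by simp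
  also have "\<dots> = {X. code L X = c}" using code_eq_iff[OF assms] by blast
  finally show ?thesis .
qed

lemma cf_nc: "cf 2 (\<lambda>xs. nc (xs!0) (xs!1))"
proof -
  let ?h = "\<lambda>ys. 2 * ys!1 + 1 + (if bit (ys!2) (ys!0) then 1 else 0)"
  have h: "cf 3 ?h"
    using cp_bit[OF cf_proj[of 2 3] cf_proj[of 0 3]]
    by (intro cf_add cf_mult cf_const cf_proj) (auto simp: cp_def)
  have "cf 2 (\<lambda>xs. prec (\<lambda>xs. 0) ?h (hd xs) (tl xs))"
    using cf_prec[of 1 "\<lambda>xs. 0" ?h] h by (simp add: cf_zero numeral_2_eq_2 numeral_3_eq_3)
  moreover have "prec (\<lambda>xs. 0) ?h L [c] = nc L c" for L c
    by (induction L) auto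
  ultimately show ?thesis by (elim cf_cong2) simp
qed

lemma union_bound:
  fixes A :: "nat \<Rightarrow> (nat \<Rightarrow> bool) set" and r :: "nat \<Rightarrow> real"
  assumes "\<And>i. A i \<in> sets coin" "\<And>i. measure coin (A i) \<le> r i" "\<And>N. (\<Sum>i<N. r i) \<le> R"
  shows "measure coin (\<Union>i. A i) \<le> R"
proof -
  interpret P: prob_space coin by (rule prob_coin)
  let ?B = "\<lambda>N. \<Union>i<N. A i"
  have inc: "incseq ?B" by (auto simp: incseq_def; meson lessThan_iff order_less_le_trans)
  have lim: "(\<lambda>N. measure coin (?B N)) \<longlonglongrightarrow> measure coin (\<Union>N. ?B N)"
    by (rule P.finite_Lim_measure_incseq) (use assms(1) inc in auto)
  have eq: "(\<Union>N. ?B N) = (\<Union>i. A i)" by auto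
  have "measure coin (?B N) \<le> R" for N
  proof -
    have "measure coin (?B N) \<le> (\<Sum>i<N. measure coin (A i))"
      by (rule measure_UNION_le) (use assms(1) in auto)
    also have "\<dots> \<le> (\<Sum>i<N. r i)" by (intro sum_mono assms(2))
    finally show ?thesis using assms(3)[of N] by simp
  qed
  then show ?thesis using LIMSEQ_le_const2[OF lim] eq by auto
qed

lemma geom: "(\<Sum>i<N. (1/2::real)^Suc (n+i)) \<le> (1/2)^n"
proof -
  have "(\<Sum>i<N. (1/2::real)^Suc (n+i)) = (1/2)^n * (1 - (1/2)^N)"
    by (induction N) (auto simp: power_add field_simps)
  also have "\<dots> \<le> (1/2)^n" by (simp add: mult_left_le)
  finally show ?thesis .
qed

lemma G:
  fixes L :: "nat \<Rightarrow> nat" and Q :: "nat \<Rightarrow> nat \<Rightarrow> bool"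
  assumes SR: "schnorr_random A"
    and Lc: "cf 1 (\<lambda>xs. L (xs!0))"
    and Qc: "cp 2 (\<lambda>xs. Q (xs!0) (xs!1))"
    and small: "\<And>e. measure coin {X. Q e (code (L e) X)} \<le> (1/2)^Suc e"
  shows "finite {e. Q e (code (L e) (\<lambda>i. i \<in> A))}"
proof (rule ccontr)
  assume inf: "infinite {e. Q e (code (L e) (\<lambda>i. i \<in> A))}"
  interpret P: prob_space coin by (rule prob_coin)
  define C where "C e = {X. Q e (code (L e) X)}" for e
  define W where "W = {(n, m). \<exists>e c. n \<le> e \<and> c < 2^(L e) \<and> Q e c \<and> m = nc (L e) c}"
  define M where "M n k = (\<Sum>e<k. L (n+e))" for n k
  define a where "a n k = (\<Sum>c<2^(M n k). if (\<exists>e<k. Q (n+e) (c mod 2^(L (n+e)))) then 1 else (0::nat))" for n k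
  define b where "b n k = 2^(M n k) - (1::nat)" for n k
  have Cs: "C e \<in> sets coin" for e
  proof -
    have eq: "C e = {X. code (L e) X \<in> {c. Q e c}}" unfolding C_def by simp
    show ?thesis unfolding eq by (rule code_in_sets)
  qed
  have T: "test_set W n = (\<Union>i. C (n+i))" for n
  proof
    show "test_set W n \<subseteq> (\<Union>i. C (n+i))"
    proof
      fix X assume "X \<in> test_set W n"
      then obtain m where "(n, m) \<in> W" "X \<in> cyl (bl_of_nat m)" unfolding test_set_def by blast
      then obtain e c where ec: "n \<le> e" "c < 2^(L e)" "Q e c" "m = nc (L e) c" "X \<in> cyl (bl_of_nat m)"
        by (auto simp: W_def)
      then have "code (L e) X = c" using cyl_nc[OF ec(2)] by auto
      then have "X \<in> C (n + (e - n))" using ec by (simp add: C_def)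
      then show "X \<in> (\<Union>i. C (n+i))" by blast
    qed
  next
    show "(\<Union>i. C (n+i)) \<subseteq> test_set W n"
    proof
      fix X assume "X \<in> (\<Union>i. C (n+i))"
      then obtain i where i: "Q (n+i) (code (L (n+i)) X)" by (auto simp: C_def)
      let ?c = "code (L (n+i)) X"
      have cl: "?c < 2^(L (n+i))" by (rule code_less)
      have "\<exists>e c. n \<le> e \<and> c < 2^(L e) \<and> Q e c \<and> nc (L (n+i)) ?c = nc (L e) c"
        by (rule exI[of _ "n+i"], rule exI[of _ ?c]) (use i cl in simp)
      then have "(n, nc (L (n+i)) ?c) \<in> W" unfolding W_def by simp
      moreover have "X \<in> cyl (bl_of_nat (nc (L (n+i)) ?c))" using cyl_nc[OF cl] by simp
      ultimately show "X \<in> test_set W n" unfolding test_set_def by blast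
    qed
  qed
  have Tsets: "test_set W n \<in> sets coin" for n
    unfolding T using Cs by auto
  have Tle: "measure coin (test_set W n) \<le> (1/2)^n" for n
    unfolding T
    by (rule union_bound[where r="\<lambda>i. (1/2)^Suc (n+i)"]) (use Cs small geom in \<open>auto simp: C_def\<close>)
  have approx: "\<bar>measure coin (test_set W n) - real (a n k) / real (b n k + 1)\<bar> \<le> (1/2)^k" for n k
  proof -
    define F where "F = (\<Union>e<k. C (n+e))"
    define S where "S = {c. \<exists>e<k. Q (n+e) (c mod 2^(L (n+e)))}"
    have LM: "e < k \<Longrightarrow> L (n+e) \<le> M n k" for e
      unfolding M_def by (rule member_le_sum) auto
    have F: "F = {X. code (M n k) X \<in> S}"
    proof -
      have "X \<in> F \<longleftrightarrow> X \<in> {X. code (M n k) X \<in> S}" for X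
        using code_mod[OF LM] by (auto simp: F_def S_def C_def)
      then show ?thesis by blast
    qed
    have mF: "measure coin F = card (S \<inter> {..<2^(M n k)}) / 2^(M n k)"
      unfolding F by (rule code_in_measure)
    have "a n k = card {c. c < 2^(M n k) \<and> (\<exists>e<k. Q (n+e) (c mod 2^(L (n+e))))}"
      unfolding a_def by (rule sum_ind)
    also have "{c. c < 2^(M n k) \<and> (\<exists>e<k. Q (n+e) (c mod 2^(L (n+e))))} = S \<inter> {..<2^(M n k)}"
      by (auto simp: S_def)
    finally have aeq: "a n k = card (S \<inter> {..<2^(M n k)})" .
    have beq: "real (b n k + 1) = 2^(M n k)" unfolding b_def by simp
    have q: "real (a n k) / real (b n k + 1) = measure coin F" using mF aeq beq by simp
    have Fs: "F \<in> sets coin" unfolding F_def using Cs by auto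
    have sub1: "F \<subseteq> test_set W n" unfolding F_def T by auto
    have sub2: "test_set W n \<subseteq> F \<union> test_set W (n+k)"
    proof
      fix X assume "X \<in> test_set W n"
      then obtain i where X: "X \<in> C (n+i)" unfolding T by auto
      show "X \<in> F \<union> test_set W (n+k)"
      proof (cases "i < k")
        case True then show ?thesis using X unfolding F_def by auto
      next
        case False
        then have "n + i = (n+k) + (i-k)" by simp
        then show ?thesis using X unfolding T by (metis UNIV_I UN_iff UnI2)
      qed
    qed
    have l1: "measure coin F \<le> measure coin (test_set W n)"
      by (rule P.finite_measure_mono[OF sub1 Tsets])
    have "measure coin (test_set W n) \<le> measure coin (F \<union> test_set W (n+k))"
      by (rule P.finite_measure_mono[OF sub2]) (use Fs Tsets in auto)
    also have "\<dots> \<le> measure coin F + measure coin (test_set W (n+k))"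
      by (rule measure_Un_le[OF Fs Tsets])
    also have "\<dots> \<le> measure coin F + (1/2)^(n+k)" using Tle[of "n+k"] by simp
    also have "(1/2::real)^(n+k) \<le> (1/2)^k" by (simp add: power_decreasing)
    finally have l2: "measure coin (test_set W n) \<le> measure coin F + (1/2)^k" by simp
    show ?thesis using l1 l2 q by simp
  qed
  define P3 where "P3 p n m = (\<exists>e<Suc p. \<exists>c<Suc p. n \<le> e \<and> c < 2^(L e) \<and> Q e c \<and> m = nc (L e) c)" for p n m
  have WP: "(n, m) \<in> W \<longleftrightarrow> (\<exists>p. P3 p n m)" for n m
  proof
    assume "(n, m) \<in> W"
    then obtain e c where "n \<le> e \<and> c < 2^(L e) \<and> Q e c \<and> m = nc (L e) c" by (auto simp: W_def)
    then have "P3 (e + c) n m" unfolding P3_def by (intro exI[of _ e] conjI exI[of _ c]) auto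
    then show "\<exists>p. P3 p n m" ..
  next
    assume "\<exists>p. P3 p n m" then show "(n, m) \<in> W" by (auto simp: P3_def W_def)
  qed
  have L5: "cf (Suc 4) (\<lambda>zs. L (zs!1))" using cf_comp1[OF Lc cf_proj[of 1 "Suc 4"]] by simp
  have Q5: "cp (Suc 4) (\<lambda>zs. Q (zs!1) (zs!0))"
    using cf_comp2[OF Qc[unfolded cp_def] cf_proj[of 1 "Suc 4"] cf_proj[of 0 "Suc 4"]] by (simp add: cp_def)
  have N5: "cf (Suc 4) (\<lambda>zs. nc (L (zs!1)) (zs!0))"
    using cf_comp2[OF cf_nc L5 cf_proj[of 0 "Suc 4"]] by simp
  have inner: "cp (Suc 4) (\<lambda>zs. zs!3 \<le> zs!1 \<and> zs!0 < 2^(L (zs!1)) \<and> Q (zs!1) (zs!0) \<and> zs!4 = nc (L (zs!1)) (zs!0))"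
    by (intro cp_and cp_le cp_less cp_eq cf_proj cf_pow2 L5 Q5 N5) auto
  have mid: "cp (Suc 3) (\<lambda>ys. \<exists>c<Suc (ys!1). ys!2 \<le> ys!0 \<and> c < 2^(L (ys!0)) \<and> Q (ys!0) c \<and> ys!3 = nc (L (ys!0)) c)"
    using cp_bex[OF inner cf_suc[OF cf_proj[of 1 4]]] by simp
  have outer: "cp (Suc 2) (\<lambda>xs. \<exists>e<Suc (xs!0). \<exists>c<Suc (xs!0). xs!1 \<le> e \<and> c < 2^(L e) \<and> Q e c \<and> xs!2 = nc (L e) c)"
    using cp_bex[OF mid cf_suc[OF cf_proj[of 0 3]]] by simp
  have ce: "ce_set2 W"
  proof -
    obtain t where t: "\<forall>xs. length xs = 2 \<longrightarrow> ((\<exists>y. \<exists>e<Suc ((y#xs)!0). \<exists>c<Suc ((y#xs)!0). (y#xs)!1 \<le> e \<and> c < 2^(L e) \<and> Q e c \<and> (y#xs)!2 = nc (L e) c) \<longleftrightarrow> (\<exists>v. evalr t xs v))"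
      using ce_pred[OF outer] by blast
    have "(n, m) \<in> W \<longleftrightarrow> (\<exists>y. evalr t [n, m] y)" for n m
      using t[rule_format, of "[n, m]"] unfolding WP P3_def by simp
    then show ?thesis unfolding ce_set2_def by blast
  qed
  have L3: "cf (Suc 2) (\<lambda>ys. L (ys!1 + ys!0))" using cf_comp1[OF Lc cf_add[OF cf_proj[of 1 "Suc 2"] cf_proj[of 0 "Suc 2"]]] by simp
  have Mc: "cf 2 (\<lambda>xs. M (xs!0) (xs!1))"
  proof -
    have "cf 2 (\<lambda>xs. \<Sum>e<xs!1. L ((e#xs)!1 + (e#xs)!0))"
      using cf_bsum[OF L3 cf_proj[of 1 2]] by simp
    then show ?thesis by (rule cf_cong) (simp add: M_def add.commute)
  qed
  have L4: "cf (Suc 3) (\<lambda>zs. L (zs!2 + zs!0))" using cf_comp1[OF Lc cf_add[OF cf_proj[of 2 "Suc 3"] cf_proj[of 0 "Suc 3"]]] by simp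
  have Qi: "cp (Suc 3) (\<lambda>zs. Q (zs!2 + zs!0) (zs!1 mod 2^(L (zs!2 + zs!0))))"
    using cf_comp2[OF Qc[unfolded cp_def] cf_add[OF cf_proj[of 2 "Suc 3"] cf_proj[of 0 "Suc 3"]] cf_mod[OF cf_proj[of 1 "Suc 3"] cf_pow2[OF L4]]]
    by (simp add: cp_def)
  have Qe: "cp (Suc 2) (\<lambda>ys. \<exists>e<ys!2. Q (ys!1 + e) (ys!0 mod 2^(L (ys!1 + e))))"
    using cp_bex[OF Qi cf_proj[of 2 3]] by simp
  have ra: "total_rec2 a"
  proof (rule total_rec2_cf)
    have "cf 2 (\<lambda>xs. \<Sum>c<2^(M (xs!0) (xs!1)). if \<exists>e<(c#xs)!2. Q ((c#xs)!1 + e) ((c#xs)!0 mod 2^(L ((c#xs)!1 + e))) then 1 else 0)"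
      using cf_bsum[OF Qe[unfolded cp_def] cf_pow2[OF Mc]] by simp
    then show "cf 2 (\<lambda>xs. a (xs!0) (xs!1))" by (rule cf_cong) (simp add: a_def)
  qed
  have rb: "total_rec2 b"
    by (rule total_rec2_cf) (unfold b_def, intro cf_sub cf_pow2 Mc cf_const)
  have "schnorr_test W a b"
    unfolding schnorr_test_def using ce ra rb Tle approx by blast
  then obtain n where n: "(\<lambda>i. i \<in> A) \<notin> test_set W n" using SR unfolding schnorr_random_def by blast
  obtain e where e: "e \<ge> n" "Q e (code (L e) (\<lambda>i. i \<in> A))"
    using inf unfolding infinite_nat_iff_unbounded_le by blast
  then have "(\<lambda>i. i \<in> A) \<in> C (n + (e - n))" by (simp add: C_def)
  then have "(\<lambda>i. i \<in> A) \<in> test_set W n" unfolding T by blast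
  then show False using n by simp
qed

lemma bit_code: "i < L \<Longrightarrow> bit (code L X) i = X i"
  using code_eq_iff[OF code_less[of L X], of X] by simp

lemma code_small: "(\<forall>i\<ge>j. \<not> X i) \<Longrightarrow> code L X < 2^j"
proof (induction L)
  case 0 then show ?case by (simp add: code_def)
next
  case (Suc L)
  show ?case
  proof (cases "L < j")
    case True
    have "code (Suc L) X < 2^(Suc L)" by (rule code_less)
    also have "(2::nat)^(Suc L) \<le> 2^j" using True by (intro power_increasing) auto
    finally show ?thesis .
  next
    case False
    then have "\<not> X L" using Suc.prems by simp
    then show ?thesis using Suc by (simp add: code_Suc)
  qed
qed

lemma measure_all_true: "finite F \<Longrightarrow> measure coin {X. \<forall>x\<in>F. X x} = (1/2)^card F"
proof -
  assume F: "finite F"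
  have eq: "{X. \<forall>x\<in>F. X x} = prod_emb UNIV (\<lambda>_. B) F (\<Pi>\<^sub>E i\<in>F. {True})"
    by (auto simp: prod_emb_iff PiE_iff restrict_def fun_eq_iff split: if_splits)
  have "emeasure coin {X. \<forall>x\<in>F. X x} = (\<Prod>i\<in>F. emeasure B {True})"
    unfolding coin_def eq
    by (rule emeasure_PiM_emb) (auto simp: measure_pmf.prob_space_axioms F)
  also have "\<dots> = (\<Prod>i\<in>F. ennreal (1/2))"
    by (intro prod.cong refl) (auto simp: emeasure_pmf_single)
  also have "\<dots> = ennreal (\<Prod>i\<in>F. 1/2)" by (rule prod_ennreal) auto
  also have "\<dots> = ennreal ((1/2)^card F)" by simp
  finally show ?thesis by (simp add: measure_def)
qed

lemma sr_infinite:
  assumes SR: "schnorr_random A"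
  shows "infinite A"
proof
  assume fin: "finite A"
  let ?L = "\<lambda>j::nat. Suc (2 * j)"
  let ?Q = "\<lambda>j c::nat. c < 2^j"
  have Lc: "cf 1 (\<lambda>xs. ?L (xs!0))" by (intro cf_suc cf_mult cf_const cf_proj) simp
  have Qc: "cp 2 (\<lambda>xs. ?Q (xs!0) (xs!1))" by (intro cp_less cf_pow2 cf_proj) auto
  have small: "measure coin {X. ?Q e (code (?L e) X)} \<le> (1/2)^Suc e" for e
  proof -
    have eq: "{X. ?Q e (code (?L e) X)} = {X. code (?L e) X \<in> {..<2^e}}" by simp
    have c: "{..<(2::nat)^e} \<inter> {..<2^(?L e)} = {..<2^e}"
      using power_increasing[of e "?L e" "2::nat"] by auto
    have "measure coin {X. ?Q e (code (?L e) X)} = card ({..<(2::nat)^e} \<inter> {..<2^(?L e)}) / 2^(?L e)"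
      unfolding eq by (rule code_in_measure)
    also have "\<dots> = (2::real)^e / 2^(?L e)" unfolding c by simp
    also have "\<dots> = (1/2)^Suc e"
    proof -
      have "Suc (2*e) = e + Suc e" by simp
      then have p: "(2::real)^(Suc (2*e)) = 2^e * 2^Suc e" by (simp only: power_add)
      have "(2::real)^e / 2^(Suc (2*e)) = 1 / 2^Suc e" unfolding p by simp
      then show ?thesis by (simp add: power_one_over)
    qed
    finally show ?thesis by simp
  qed
  have "finite {e. ?Q e (code (?L e) (\<lambda>i. i \<in> A))}" by (rule G[OF SR Lc Qc small])
  moreover obtain N where N: "A \<subseteq> {..<N}" using fin finite_nat_bounded by blast
  have "{N..} \<subseteq> {e. ?Q e (code (?L e) (\<lambda>i. i \<in> A))}"
    using N by (auto intro!: code_small)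
  ultimately show False using infinite_Ici[of N] finite_subset by blast
qed

theorem mainTheorem11:
  fixes A :: "nat set"
  assumes "schnorr_random A"
  shows "canonically_immune A"
  unfolding canonically_immune_def
proof (intro conjI exI[of _ "\<lambda>x. x"] allI impI)
  show "infinite A" by (rule sr_infinite[OF assms])
  show "total_rec1 (\<lambda>x. x)" by (rule total_rec1_cf) (simp add: cf_proj)
  fix D assume D: "canonical_numbering D"
  have finD: "finite (D e)" for e using D unfolding canonical_numbering_def by auto
  have memD: "cp 2 (\<lambda>xs. xs!1 \<in> D (xs!0))"
    using cp_rec_rel2[of "\<lambda>e x. x \<in> D e"] D unfolding canonical_numbering_def by simp
  have cardD: "cf 1 (\<lambda>xs. card (D (xs!0)))"
    using cf_total_rec1[of "\<lambda>e. card (D e)"] D unfolding canonical_numbering_def by simp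
  define L where "L e = (LEAST l. (\<Sum>x<l. if x \<in> D e then 1 else (0::nat)) = card (D e))" for e
  have sumD: "(\<Sum>x<l. if x \<in> D e then 1 else (0::nat)) = card (D e) \<longleftrightarrow> D e \<subseteq> {..<l}" for l e
  proof -
    have s: "(\<Sum>x<l. if x \<in> D e then 1 else (0::nat)) = card {x. x < l \<and> x \<in> D e}" by (rule sum_ind)
    have sub: "{x. x < l \<and> x \<in> D e} \<subseteq> D e" by auto
    show ?thesis
    proof
      assume "(\<Sum>x<l. if x \<in> D e then 1 else (0::nat)) = card (D e)"
      then have "card {x. x < l \<and> x \<in> D e} = card (D e)" using s by simp
      then have "{x. x < l \<and> x \<in> D e} = D e" using card_subset_eq[OF finD sub] by simp
      then show "D e \<subseteq> {..<l}" by auto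
    next
      assume "D e \<subseteq> {..<l}"
      then have "{x. x < l \<and> x \<in> D e} = D e" by auto
      then show "(\<Sum>x<l. if x \<in> D e then 1 else (0::nat)) = card (D e)" using s by simp
    qed
  qed
  have DL: "D e \<subseteq> {..<L e}" for e
  proof -
    obtain l where "D e \<subseteq> {..<l}" using finD finite_nat_bounded by blast
    then have "\<exists>l. (\<Sum>x<l. if x \<in> D e then 1 else (0::nat)) = card (D e)" using sumD by blast
    then have "(\<Sum>x<L e. if x \<in> D e then 1 else (0::nat)) = card (D e)" unfolding L_def by (rule LeastI_ex)
    then show ?thesis using sumD by blast
  qed
  have Lc: "cf 1 (\<lambda>xs. L (xs!0))"
  proof -
    have mem3: "cf (Suc (Suc 1)) (\<lambda>zs. if zs!0 \<in> D (zs!2) then 1 else 0)"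
      using cf_comp2[OF memD[unfolded cp_def] cf_proj[of 2 "Suc (Suc 1)"] cf_proj[of 0 "Suc (Suc 1)"]] by simp
    have P: "cp (Suc 1) (\<lambda>ys. (\<Sum>x<ys!0. if x \<in> D (ys!1) then 1 else (0::nat)) = card (D (ys!1)))"
    proof -
      have "cp (Suc 1) (\<lambda>ys. (\<Sum>x<ys!0. (\<lambda>zs. if zs!0 \<in> D (zs!2) then 1 else (0::nat)) (x # ys)) = card (D (ys!1)))"
        by (rule cp_eq[OF cf_bsum[OF mem3 cf_proj]]) (use cf_comp1[OF cardD cf_proj[of 1 "Suc 1"]] in auto)
      then show ?thesis by simp
    qed
    have "cf 1 (\<lambda>xs. LEAST y. (\<Sum>x<(y#xs)!0. if x \<in> D ((y#xs)!1) then 1 else (0::nat)) = card (D ((y#xs)!1)))"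
    proof (rule cf_least[OF P])
      fix xs :: "nat list" assume "length xs = 1"
      obtain l where "D (xs!0) \<subseteq> {..<l}" using finD finite_nat_bounded by blast
      then show "\<exists>y. (\<Sum>x<(y#xs)!0. if x \<in> D ((y#xs)!1) then 1 else (0::nat)) = card (D ((y#xs)!1))"
        using sumD by auto
    qed
    then show ?thesis by (simp add: L_def)
  qed
  define Q where "Q e (c::nat) = (e < card (D e) \<and> (\<forall>x<L e. x \<in> D e \<longrightarrow> bit c x))" for e c
  have Qc: "cp 2 (\<lambda>xs. Q (xs!0) (xs!1))"
  proof -
    have mem3: "cp (Suc 2) (\<lambda>zs. zs!0 \<in> D (zs!1))"
      using cf_comp2[OF memD[unfolded cp_def] cf_proj[of 1 "Suc 2"] cf_proj[of 0 "Suc 2"]] by (simp add: cp_def)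
    have b3: "cp (Suc 2) (\<lambda>zs. bit (zs!2) (zs!0))" by (intro cp_bit cf_proj) auto
    have "cp 2 (\<lambda>xs. xs!0 < card (D (xs!0)) \<and> (\<forall>y<L (xs!0). (\<lambda>zs. zs!0 \<in> D (zs!1) \<longrightarrow> bit (zs!2) (zs!0)) (y # xs)))"
      by (intro cp_and cp_less cf_proj cp_ball cp_imp mem3 b3)
         (use cf_comp1[OF cardD cf_proj[of 0 2]] cf_comp1[OF Lc cf_proj[of 0 2]] in auto)
    then show ?thesis by (rule cp_cong) (auto simp: Q_def)
  qed
  have small: "measure coin {X. Q e (code (L e) X)} \<le> (1/2)^Suc e" for e
  proof (cases "e < card (D e)")
    case True
    have "{X. Q e (code (L e) X)} = {X. \<forall>x\<in>D e. X x}"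
      using DL[of e] True by (auto simp: Q_def bit_code)
    then have "measure coin {X. Q e (code (L e) X)} = (1/2)^card (D e)"
      using measure_all_true[OF finD] by simp
    also have "\<dots> \<le> (1/2)^Suc e" using True by (intro power_decreasing) auto
    finally show ?thesis .
  next
    case False
    then have "{X. Q e (code (L e) X)} = {}" by (auto simp: Q_def)
    then show ?thesis by simp
  qed
  have "finite {e. Q e (code (L e) (\<lambda>i. i \<in> A))}" by (rule G[OF assms Lc Qc small])
  moreover have "{e. Q e (code (L e) (\<lambda>i. i \<in> A))} = {e. D e \<subseteq> A \<and> e < card (D e)}"
    using DL by (auto simp: Q_def bit_code)
  ultimately show "finite {e. D e \<subseteq> A \<and> e < card (D e)}" by simp
qed

end
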